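(* Let $M_t=(-1,1)\times(-1,0)$ with coordinates $(u,v)$ and metric $g_t=-\Omega^2(du\otimes dv+dv\otimes du)$, $\Omega$ smooth and strictly positive, with $\partial_u$ future directed null. Let $\gamma:[0,1]\to M_t$ be a locally Lipschitz future directed causal curve and let $p\in J^+(\gamma(0),M_t)\cap J^-(\gamma(1),M_t)$. Then there exists a causal homotopy $\Gamma:[0,1]\times[0,1]\to M_t$ of $\gamma$ with fixed endpoints such that $p=\Gamma(s;\lambda)$ for some $(s,\lambda)\in[0,1]\times[0,1]$.
   Context: $J^\pm(q,M_t)$ is the set of points reachable from $q$ by a future/past directed locally Lipschitz causal curve. A causal homotopy of $\gamma$ with fixed endpoints is a continuous map $\Gamma:[0,1]\times[0,1]\to M_t$, $(s,\lambda)\mapsto\Gamma(s;\lambda)$, such that $\Gamma(\cdot;0)=\gamma$ and, for each $\lambda$, $s\mapsto\Gamma(s;\lambda)$ is a future directed locally Lipschitz causal curve from $\gamma(0)$ to $\gamma(1)$. *)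

theory Defs
  imports "HOL-Analysis.Analysis"
begin

type_synonym pt = "real \<times> real"  (* coordinates (u,v) *)

definition Mt :: "pt set" where
  "Mt = {-1<..<1} \<times> {-1<..<0}"

(* C^infinity on an open set S of R^2: there is a family of functions containing f,
   each continuous on S and Frechet differentiable on S with both partial
   derivatives again in the family *)
definition smooth2_on :: "pt set \<Rightarrow> (pt \<Rightarrow> real) \<Rightarrow> bool" where
  "smooth2_on S f \<longleftrightarrow> (\<exists>F. f \<in> F \<and> (\<forall>g\<in>F. continuous_on S g \<and>
      (\<exists>gu\<in>F. \<exists>gv\<in>F. \<forall>x\<in>S.
         (g has_derivative (\<lambda>h. fst h * gu x + snd h * gv x)) (at x))))"

definition gt :: "(pt \<Rightarrow> real) \<Rightarrow> pt \<Rightarrow> pt \<Rightarrow> pt \<Rightarrow> real" where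
  "gt \<Omega> x X Y = - (\<Omega> x)\<^sup>2 * (fst X * snd Y + snd X * fst Y)"

(* time orientation: the timelike field T = \<partial>_u + \<partial>_v, which lies in the same cone as
   the future directed null vector \<partial>_u (gt(\<partial>_u,T) < 0). *)
definition fd_causal_vec :: "(pt \<Rightarrow> real) \<Rightarrow> pt \<Rightarrow> pt \<Rightarrow> bool" where
  "fd_causal_vec \<Omega> x X \<longleftrightarrow> X \<noteq> 0 \<and> gt \<Omega> x X X \<le> 0 \<and> gt \<Omega> x X (1, 1) < 0"

definition fd_causal_curve :: "(pt \<Rightarrow> real) \<Rightarrow> real \<Rightarrow> real \<Rightarrow> (real \<Rightarrow> pt) \<Rightarrow> bool" where
  "fd_causal_curve \<Omega> a b c \<longleftrightarrow> a \<le> b \<and> c ` {a..b} \<subseteq> Mt \<and>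
     (\<forall>s\<in>{a..b}. \<exists>e>0. \<exists>L. L-lipschitz_on ({a..b} \<inter> cball s e) c) \<and>
     (AE s in lebesgue. s \<in> {a..b} \<longrightarrow>
        (\<exists>d. (c has_vector_derivative d) (at s) \<and> fd_causal_vec \<Omega> (c s) d))"

definition Jplus :: "(pt \<Rightarrow> real) \<Rightarrow> pt \<Rightarrow> pt set" where
  "Jplus \<Omega> q = {p. \<exists>a b c. fd_causal_curve \<Omega> a b c \<and> c a = q \<and> c b = p}"

definition Jminus :: "(pt \<Rightarrow> real) \<Rightarrow> pt \<Rightarrow> pt set" where
  "Jminus \<Omega> q = {p. \<exists>a b c. fd_causal_curve \<Omega> a b c \<and> c a = p \<and> c b = q}"

definition causal_homotopy :: "(pt \<Rightarrow> real) \<Rightarrow> (real \<Rightarrow> pt) \<Rightarrow> (real \<Rightarrow> real \<Rightarrow> pt) \<Rightarrow> bool" where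
  "causal_homotopy \<Omega> \<gamma> \<Gamma> \<longleftrightarrow>
     continuous_on ({0..1} \<times> {0..1}) (\<lambda>(s, l). \<Gamma> s l) \<and>
     (\<forall>s\<in>{0..1}. \<forall>l\<in>{0..1}. \<Gamma> s l \<in> Mt) \<and>
     (\<forall>s\<in>{0..1}. \<Gamma> s 0 = \<gamma> s) \<and>
     (\<forall>l\<in>{0..1}. fd_causal_curve \<Omega> 0 1 (\<lambda>s. \<Gamma> s l) \<and>
        \<Gamma> 0 l = \<gamma> 0 \<and> \<Gamma> 1 l = \<gamma> 1)"

end

theory Submission
  imports Defs
begin

definition fdv :: "pt \<Rightarrow> bool" where
  "fdv X \<longleftrightarrow> fst X \<ge> 0 \<and> snd X \<ge> 0 \<and> X \<noteq> 0"

lemma fdvec_iff: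
  assumes "x \<in> Mt" "\<forall>x\<in>Mt. \<Omega> x > 0"
  shows "fd_causal_vec \<Omega> x X \<longleftrightarrow> fdv X"
proof -
  obtain x1 x2 where X: "X = (x1, x2)" by (cases X)
  have w: "(\<Omega> x)\<^sup>2 > 0" using assms by auto
  have "gt \<Omega> x X X \<le> 0 \<longleftrightarrow> (\<Omega> x)\<^sup>2 * (2 * (x1*x2)) \<ge> 0"
    by (simp add: gt_def X algebra_simps)
  also have "\<dots> \<longleftrightarrow> x1 * x2 \<ge> 0" using w by (simp add: zero_le_mult_iff)
  finally have 1: "gt \<Omega> x X X \<le> 0 \<longleftrightarrow> x1 * x2 \<ge> 0" .
  have "gt \<Omega> x X (1,1) < 0 \<longleftrightarrow> (\<Omega> x)\<^sup>2 * (x1 + x2) > 0"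
    by (simp add: gt_def X algebra_simps; linarith)
  also have "\<dots> \<longleftrightarrow> x1 + x2 > 0" using w by (simp add: zero_less_mult_iff)
  finally have 2: "gt \<Omega> x X (1,1) < 0 \<longleftrightarrow> x1 + x2 > 0" .
  have 3: "(x1 * x2 \<ge> 0 \<and> x1 + x2 > 0) \<longleftrightarrow> (x1 \<ge> 0 \<and> x2 \<ge> 0 \<and> \<not> (x1 = 0 \<and> x2 = 0))"
  proof
    assume H: "x1 * x2 \<ge> 0 \<and> x1 + x2 > 0"
    have "x1 \<ge> 0"
    proof (rule ccontr)
      assume "\<not> x1 \<ge> 0"
      then have "x1 < 0" "x2 > 0" using H by auto
      then have "x1 * x2 < 0" by (simp add: mult_neg_pos)
      then show False using H by auto
    qed
    moreover have "x2 \<ge> 0"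
    proof (rule ccontr)
      assume "\<not> x2 \<ge> 0"
      then have "x2 < 0" "x1 > 0" using H by auto
      then have "x1 * x2 < 0" by (simp add: mult_pos_neg)
      then show False using H by auto
    qed
    ultimately show "x1 \<ge> 0 \<and> x2 \<ge> 0 \<and> \<not> (x1 = 0 \<and> x2 = 0)" using H by auto
  qed auto
  show ?thesis
    unfolding fd_causal_vec_def fdv_def using 1 2 3 by (auto simp: X zero_prod_def)
qed

lemma loclip_imp_lip:
  fixes c :: "real \<Rightarrow> 'a::metric_space"
  assumes A: "\<forall>s\<in>{a..b}. \<exists>e>0. \<exists>L. L-lipschitz_on ({a..b} \<inter> cball s e) c"
  shows "\<exists>L. L-lipschitz_on {a..b} c"
proof -
  have "\<forall>s. \<exists>eL. s \<in> {a..b} \<longrightarrow> fst eL > 0 \<and> (snd eL)-lipschitz_on ({a..b} \<inter> cball s (fst eL)) c"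
  proof
    fix s
    show "\<exists>eL. s \<in> {a..b} \<longrightarrow> fst eL > 0 \<and> (snd eL)-lipschitz_on ({a..b} \<inter> cball s (fst eL)) c"
    proof (cases "s \<in> {a..b}")
      case True
      then obtain e L where "e > 0" "L-lipschitz_on ({a..b} \<inter> cball s e) c" using A by blast
      then show ?thesis by (intro exI[of _ "(e, L)"]) simp
    next
      case False
      then show ?thesis by blast
    qed
  qed
  then obtain eL where eL0: "\<forall>s. s \<in> {a..b} \<longrightarrow> fst (eL s) > 0 \<and> (snd (eL s))-lipschitz_on ({a..b} \<inter> cball s (fst (eL s))) c"
    by (rule choice[THEN exE])
  define e where "e = (\<lambda>s. fst (eL s))"
  define L where "L = (\<lambda>s. snd (eL s))"
  have eL: "\<And>s. s \<in> {a..b} \<Longrightarrow> e s > 0 \<and> (L s)-lipschitz_on ({a..b} \<inter> cball s (e s)) c"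
    using eL0 unfolding e_def L_def by blast
  have cov: "{a..b} \<subseteq> (\<Union>s\<in>{a..b}. ball s (e s))"
  proof
    fix x assume x: "x \<in> {a..b}"
    then have "x \<in> ball x (e x)" using eL[OF x] by simp
    then show "x \<in> (\<Union>s\<in>{a..b}. ball s (e s))" using x by blast
  qed
  obtain I where I: "I \<subseteq> {a..b}" "finite I" "{a..b} \<subseteq> (\<Union>s\<in>I. ball s (e s))"
    by (rule compactE_image[OF compact_Icc _ cov]) simp
  define M where "M = Max (insert 0 (L ` I))"
  have M0: "0 \<le> M" unfolding M_def using I(2) by simp
  have M: "L s \<le> M" if "s \<in> I" for s unfolding M_def using I(2) that by simp
  have "M-lipschitz_on {a..b} c"
  proof (rule lipschitz_on_closed_Union[where I=I and U="\<lambda>s. {a..b} \<inter> cball s (e s)"])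
    fix i assume i: "i \<in> I"
    then have "i \<in> {a..b}" using I(1) by blast
    then have "(L i)-lipschitz_on ({a..b} \<inter> cball i (e i)) c" using eL by blast
    then show "M-lipschitz_on ({a..b} \<inter> cball i (e i)) c"
      by (rule lipschitz_on_mono) (use M[OF i] in simp_all)
  next
    fix i show "closed ({a..b} \<inter> cball i (e i))" by (intro closed_Int closed_atLeastAtMost closed_cball)
  next
    show "finite I" by fact
  next
    show "0 \<le> M" by fact
  next
    show "{a..b} \<subseteq> (\<Union>i\<in>I. {a..b} \<inter> cball i (e i))"
    proof
      fix x assume x: "x \<in> {a..b}"
      then obtain i where "i \<in> I" "x \<in> ball i (e i)" using I(3) by blast
      then show "x \<in> (\<Union>i\<in>I. {a..b} \<inter> cball i (e i))" using x by (intro UN_I[of i]) (auto simp: less_imp_le)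
    qed
  qed
  then show ?thesis by blast
qed

definition curve :: "real \<Rightarrow> real \<Rightarrow> (real \<Rightarrow> pt) \<Rightarrow> bool" where
  "curve a b c \<longleftrightarrow> a \<le> b \<and> c ` {a..b} \<subseteq> Mt \<and> (\<exists>L. L-lipschitz_on {a..b} c) \<and>
     (\<exists>N. negligible N \<and> (\<forall>s\<in>{a..b} - N. \<exists>d. (c has_vector_derivative d) (at s) \<and> fdv d))"

lemma curve_iff:
  assumes pos: "\<forall>x\<in>Mt. \<Omega> x > 0"
  shows "fd_causal_curve \<Omega> a b c \<longleftrightarrow> curve a b c"
proof
  assume H: "fd_causal_curve \<Omega> a b c"
  then have ab: "a \<le> b" and im: "c ` {a..b} \<subseteq> Mt"
    and loc: "\<forall>s\<in>{a..b}. \<exists>e>0. \<exists>L. L-lipschitz_on ({a..b} \<inter> cball s e) c"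
    and ae: "AE s in lebesgue. s \<in> {a..b} \<longrightarrow> (\<exists>d. (c has_vector_derivative d) (at s) \<and> fd_causal_vec \<Omega> (c s) d)"
    unfolding fd_causal_curve_def by auto
  from ae obtain N where N: "negligible N"
    "{s. \<not> (s \<in> {a..b} \<longrightarrow> (\<exists>d. (c has_vector_derivative d) (at s) \<and> fd_causal_vec \<Omega> (c s) d))} \<subseteq> N"
    unfolding eventually_ae_filter_negligible by blast
  have "\<forall>s\<in>{a..b} - N. \<exists>d. (c has_vector_derivative d) (at s) \<and> fdv d"
  proof
    fix s assume s: "s \<in> {a..b} - N"
    then have "c s \<in> Mt" using im by auto
    with s N(2) show "\<exists>d. (c has_vector_derivative d) (at s) \<and> fdv d"
      using fdvec_iff[OF _ pos] by blast
  qed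
  then show "curve a b c" unfolding curve_def using ab im loclip_imp_lip[OF loc] N(1) by blast
next
  assume H: "curve a b c"
  then obtain L N where ab: "a \<le> b" and im: "c ` {a..b} \<subseteq> Mt" and L: "L-lipschitz_on {a..b} c"
    and N: "negligible N" and D: "\<forall>s\<in>{a..b} - N. \<exists>d. (c has_vector_derivative d) (at s) \<and> fdv d"
    unfolding curve_def by blast
  have loc: "\<forall>s\<in>{a..b}. \<exists>e>0. \<exists>L. L-lipschitz_on ({a..b} \<inter> cball s e) c"
  proof
    fix s assume "s \<in> {a..b}"
    have "L-lipschitz_on ({a..b} \<inter> cball s 1) c" by (rule lipschitz_on_subset[OF L]) blast
    then show "\<exists>e>0. \<exists>L. L-lipschitz_on ({a..b} \<inter> cball s e) c" using zero_less_one by blast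
  qed
  have ae: "AE s in lebesgue. s \<in> {a..b} \<longrightarrow> (\<exists>d. (c has_vector_derivative d) (at s) \<and> fd_causal_vec \<Omega> (c s) d)"
    unfolding eventually_ae_filter_negligible
  proof (intro exI conjI)
    show "negligible N" by fact
    show "{s. \<not> (s \<in> {a..b} \<longrightarrow> (\<exists>d. (c has_vector_derivative d) (at s) \<and> fd_causal_vec \<Omega> (c s) d))} \<subseteq> N"
    proof
      fix s assume s: "s \<in> {s. \<not> (s \<in> {a..b} \<longrightarrow> (\<exists>d. (c has_vector_derivative d) (at s) \<and> fd_causal_vec \<Omega> (c s) d))}"
      show "s \<in> N"
      proof (rule ccontr)
        assume "s \<notin> N"
        with s have "s \<in> {a..b} - N" by auto
        then obtain d where "(c has_vector_derivative d) (at s)" "fdv d" using D by blast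
        moreover have "c s \<in> Mt" using s im by auto
        ultimately show False using s fdvec_iff[OF _ pos] by blast
      qed
    qed
  qed
  show "fd_causal_curve \<Omega> a b c" unfolding fd_causal_curve_def using ab im loc ae by blast
qed

lemma lip_aff: "\<bar>k\<bar>-lipschitz_on U (\<lambda>s::real. a + s * k)"
  by (rule lipschitz_onI) (simp_all add: dist_real_def left_diff_distrib[symmetric] abs_mult)

lemma aff_in:
  fixes x s uu vv k :: real
  assumes "s \<in> {uu..vv}" "0 \<le> k"
  shows "x + s*k \<in> {(x + uu*k)..(x + vv*k)}"
  using assms by (auto intro: mult_right_mono)

lemma fdv_scale: "k > 0 \<Longrightarrow> fdv d \<Longrightarrow> fdv (k *\<^sub>R d)"
  by (auto simp: fdv_def)

lemma fdv_comb:
  assumes "fdv x" "fdv y" "0 \<le> l" "l \<le> 1"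
  shows "fdv ((1-l) *\<^sub>R x + l *\<^sub>R y)"
proof -
  obtain x1 x2 where X: "x = (x1,x2)" by (cases x)
  obtain y1 y2 where Y: "y = (y1,y2)" by (cases y)
  have h: "x1 \<ge> 0" "x2 \<ge> 0" "y1 \<ge> 0" "y2 \<ge> 0" "\<not>(x1 = 0 \<and> x2 = 0)" "\<not>(y1 = 0 \<and> y2 = 0)"
    using assms(1,2) by (auto simp: fdv_def X Y zero_prod_def)
  have a: "(1-l)*x1 \<ge> 0" "(1-l)*x2 \<ge> 0" "l*y1 \<ge> 0" "l*y2 \<ge> 0" using h assms by auto
  have nz: "\<not> ((1-l)*x1 + l*y1 = 0 \<and> (1-l)*x2 + l*y2 = 0)"
  proof
    assume z: "(1-l)*x1 + l*y1 = 0 \<and> (1-l)*x2 + l*y2 = 0"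
    then have "(1-l)*x1 = 0" "(1-l)*x2 = 0" "l*y1 = 0" "l*y2 = 0" using a by linarith+
    then show False using h by (cases "l = 1") auto
  qed
  show ?thesis using a nz by (auto simp: fdv_def X Y zero_prod_def)
qed

lemma convex_Mt: "convex Mt" unfolding Mt_def by (intro convex_Times convex_real_interval)

theorem lemma2p10:
  fixes \<Omega> :: "pt \<Rightarrow> real" and \<gamma> :: "real \<Rightarrow> pt" and p :: pt
  assumes "smooth2_on Mt \<Omega>" and "\<forall>x\<in>Mt. \<Omega> x > 0"
    and "fd_causal_curve \<Omega> 0 1 \<gamma>"
    and "p \<in> Jplus \<Omega> (\<gamma> 0) \<inter> Jminus \<Omega> (\<gamma> 1)"
  shows "\<exists>\<Gamma>. causal_homotopy \<Omega> \<gamma> \<Gamma> \<and> (\<exists>s\<in>{0..1}. \<exists>l\<in>{0..1}. p = \<Gamma> s l)"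
proof -
  note pos = assms(2)
  have g: "curve 0 1 \<gamma>" using assms(3) curve_iff[OF pos] by blast
  from assms(4) obtain a1 b1 c1 a2 b2 c2 where
    C1: "fd_causal_curve \<Omega> a1 b1 c1" "c1 a1 = \<gamma> 0" "c1 b1 = p" and
    C2: "fd_causal_curve \<Omega> a2 b2 c2" "c2 a2 = p" "c2 b2 = \<gamma> 1"
    unfolding Jplus_def Jminus_def by blast
  have c1: "curve a1 b1 c1" and c2: "curve a2 b2 c2" using C1 C2 curve_iff[OF pos] by auto
  from g obtain Lg Ng where gim: "\<gamma> ` {0..1} \<subseteq> Mt" and gL: "Lg-lipschitz_on {0..1} \<gamma>"
    and Ng: "negligible Ng" and gD: "\<forall>s\<in>{0..1} - Ng. \<exists>d. (\<gamma> has_vector_derivative d) (at s) \<and> fdv d"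
    unfolding curve_def by blast
  from c1 obtain L1 N1 where ab1: "a1 \<le> b1" and im1: "c1 ` {a1..b1} \<subseteq> Mt" and L1: "L1-lipschitz_on {a1..b1} c1"
    and N1: "negligible N1" and D1: "\<forall>s\<in>{a1..b1} - N1. \<exists>d. (c1 has_vector_derivative d) (at s) \<and> fdv d"
    unfolding curve_def by blast
  from c2 obtain L2 N2 where ab2: "a2 \<le> b2" and im2: "c2 ` {a2..b2} \<subseteq> Mt" and L2: "L2-lipschitz_on {a2..b2} c2"
    and N2: "negligible N2" and D2: "\<forall>s\<in>{a2..b2} - N2. \<exists>d. (c2 has_vector_derivative d) (at s) \<and> fdv d"
    unfolding curve_def by blast
  have gcont: "continuous_on {0..1} \<gamma>" using gL lipschitz_on_continuous_on by blast
  have gfst: "continuous_on ({0..1} \<times> {0..1}) (\<lambda>z. \<gamma> (fst z))"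
    by (rule continuous_on_compose2[OF gcont continuous_on_fst]) auto
  have triv: "causal_homotopy \<Omega> \<gamma> (\<lambda>s l. \<gamma> s)"
    unfolding causal_homotopy_def case_prod_unfold using gfst gim assms(3) by auto
  show ?thesis
  proof (cases "a1 = b1 \<or> a2 = b2")
    case True
    then have "p = \<gamma> 0 \<or> p = \<gamma> 1" using C1 C2 by auto
    then show ?thesis using triv by (intro exI[of _ "\<lambda>s l. \<gamma> s"]) force
  next
    case False
    then have lt1: "a1 < b1" and lt2: "a2 < b2" using ab1 ab2 by auto
    define k1 where "k1 = 2*(b1-a1)"
    define k2 where "k2 = 2*(b2-a2)"
    define a2' where "a2' = a2 - (b2 - a2)"
    have k1: "k1 > 0" and k2: "k2 > 0" using lt1 lt2 by (auto simp: k1_def k2_def)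
    define f1 where "f1 = (\<lambda>s. c1 (a1 + s * k1))"
    define f2 where "f2 = (\<lambda>s. c2 (a2' + s * k2))"
    define \<sigma> where "\<sigma> = (\<lambda>s. if s \<le> 1/2 then f1 s else f2 s)"
    have in1: "a1 + s * k1 \<in> {a1..b1}" if "s \<in> {0..1/2}" for s
    proof -
      have e: "a1 + 0*k1 = a1" "a1 + (1/2)*k1 = b1" by (simp_all add: k1_def field_simps)
      from aff_in[OF that less_imp_le[OF k1], of a1] show ?thesis by (simp only: e)
    qed
    have in2: "a2' + s * k2 \<in> {a2..b2}" if "s \<in> {1/2..1}" for s
    proof -
      have e: "a2' + (1/2)*k2 = a2" "a2' + 1*k2 = b2" by (simp_all add: k2_def a2'_def field_simps)
      from aff_in[OF that less_imp_le[OF k2], of a2'] show ?thesis by (simp only: e)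
    qed
    have f1L: "(L1 * \<bar>k1\<bar>)-lipschitz_on {0..1/2} f1"
      unfolding f1_def
      by (rule lipschitz_on_compose2[OF lip_aff lipschitz_on_subset[OF L1]]) (use in1 in auto)
    have f2L: "(L2 * \<bar>k2\<bar>)-lipschitz_on {1/2..1} f2"
      unfolding f2_def
      by (rule lipschitz_on_compose2[OF lip_aff lipschitz_on_subset[OF L2]]) (use in2 in auto)
    have E: "a1 + 0*k1 = a1" "a1 + (1/2)*k1 = b1" "a2' + (1/2)*k2 = a2" "a2' + 1*k2 = b2"
      by (simp_all add: k1_def k2_def a2'_def field_simps)
    have f1h: "f1 (1/2) = p" unfolding f1_def by (simp only: E C1(3))
    have f10: "f1 0 = \<gamma> 0" unfolding f1_def by (simp only: E C1(2))
    have f2h: "f2 (1/2) = p" unfolding f2_def by (simp only: E C2(2))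
    have f21: "f2 1 = \<gamma> 1" unfolding f2_def by (simp only: E C2(3))
    have f12: "f1 (1/2) = f2 (1/2)" using f1h f2h by simp
    have sL: "(max (L1 * \<bar>k1\<bar>) (L2 * \<bar>k2\<bar>))-lipschitz_on {0..1} \<sigma>"
      unfolding \<sigma>_def by (rule lipschitz_on_concat_max[OF f1L f2L f12])
    have scont: "continuous_on {0..1} \<sigma>" using sL lipschitz_on_continuous_on by blast
    have sfst: "continuous_on ({0..1} \<times> {0..1}) (\<lambda>z. \<sigma> (fst z))"
      by (rule continuous_on_compose2[OF scont continuous_on_fst]) auto
    have sim: "\<sigma> s \<in> Mt" if "s \<in> {0..1}" for s
    proof (cases "s \<le> 1/2")
      case True
      then show ?thesis using in1[of s] that im1 by (auto simp: \<sigma>_def f1_def)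
    next
      case False
      then show ?thesis using in2[of s] that im2 by (auto simp: \<sigma>_def f2_def)
    qed
    have s0: "\<sigma> 0 = \<gamma> 0" using f10 by (simp add: \<sigma>_def)
    have s1: "\<sigma> 1 = \<gamma> 1" using f21 by (simp add: \<sigma>_def)
    have sh: "\<sigma> (1/2) = p" using f1h by (simp add: \<sigma>_def)
    define \<psi>1 where "\<psi>1 = (\<lambda>t. (t - a1) * (1/k1))"
    define \<psi>2 where "\<psi>2 = (\<lambda>t. (t - a2') * (1/k2))"
    define Ns where "Ns = {0, 1/2, 1} \<union> \<psi>1 ` N1 \<union> \<psi>2 ` N2"
    have Ns: "negligible Ns"
    proof -
      have "negligible (\<psi>1 ` N1)"
        by (rule negligible_differentiable_image_negligible[OF order_refl N1])
           (insert k1, unfold \<psi>1_def differentiable_on_def, auto intro!: derivative_intros)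
      moreover have "negligible (\<psi>2 ` N2)"
        by (rule negligible_differentiable_image_negligible[OF order_refl N2])
           (insert k2, unfold \<psi>2_def differentiable_on_def, auto intro!: derivative_intros)
      ultimately show ?thesis unfolding Ns_def by (intro negligible_Un) auto
    qed
    have sD: "\<exists>d. (\<sigma> has_vector_derivative d) (at s) \<and> fdv d" if s: "s \<in> {0..1} - Ns" for s
    proof (cases "s < 1/2")
      case True
      have s': "s \<in> {0<..<1/2}" using s True by (auto simp: Ns_def)
      define t where "t = a1 + s * k1"
      have "t \<in> {a1..b1}" using in1[of s] s' by (auto simp: t_def)
      moreover have "t \<notin> N1"
      proof
        assume "t \<in> N1"
        then have "\<psi>1 t \<in> Ns" by (auto simp: Ns_def)
        moreover have "\<psi>1 t = s" using k1 by (simp add: \<psi>1_def t_def)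
        ultimately show False using s by auto
      qed
      ultimately obtain d where d: "(c1 has_vector_derivative d) (at t)" "fdv d" using D1 by blast
      have ph: "((\<lambda>s. a1 + s * k1) has_vector_derivative k1) (at s)"
        unfolding has_real_derivative_iff_has_vector_derivative[symmetric]
        by (auto intro!: derivative_eq_intros)
      have "((c1 \<circ> (\<lambda>s. a1 + s * k1)) has_vector_derivative (k1 *\<^sub>R d)) (at s)"
        by (rule vector_diff_chain_at[OF ph]) (use d(1) in \<open>simp add: t_def\<close>)
      then have "(\<sigma> has_vector_derivative (k1 *\<^sub>R d)) (at s)"
        by (rule has_vector_derivative_transform_within_open[where S="{0<..<1/2}"])
           (use s' in \<open>auto simp: \<sigma>_def f1_def\<close>)
      then show ?thesis using fdv_scale[OF k1 d(2)] by blast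
    next
      case False
      have s': "s \<in> {1/2<..<1}" using s False by (auto simp: Ns_def)
      define t where "t = a2' + s * k2"
      have "t \<in> {a2..b2}" using in2[of s] s' by (auto simp: t_def)
      moreover have "t \<notin> N2"
      proof
        assume "t \<in> N2"
        then have "\<psi>2 t \<in> Ns" by (auto simp: Ns_def)
        moreover have "\<psi>2 t = s" using k2 by (simp add: \<psi>2_def t_def)
        ultimately show False using s by auto
      qed
      ultimately obtain d where d: "(c2 has_vector_derivative d) (at t)" "fdv d" using D2 by blast
      have ph: "((\<lambda>s. a2' + s * k2) has_vector_derivative k2) (at s)"
        unfolding has_real_derivative_iff_has_vector_derivative[symmetric]
        by (auto intro!: derivative_eq_intros)
      have "((c2 \<circ> (\<lambda>s. a2' + s * k2)) has_vector_derivative (k2 *\<^sub>R d)) (at s)"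
        by (rule vector_diff_chain_at[OF ph]) (use d(1) in \<open>simp add: t_def\<close>)
      then have "(\<sigma> has_vector_derivative (k2 *\<^sub>R d)) (at s)"
        by (rule has_vector_derivative_transform_within_open[where S="{1/2<..<1}"])
           (use s' in \<open>auto simp: \<sigma>_def f2_def\<close>)
      then show ?thesis using fdv_scale[OF k2 d(2)] by blast
    qed
    define \<Gamma> where "\<Gamma> = (\<lambda>s l. (1 - l) *\<^sub>R \<gamma> s + l *\<^sub>R \<sigma> s)"
    have Gim: "\<Gamma> s l \<in> Mt" if "s \<in> {0..1}" "l \<in> {0..1}" for s l
    proof -
      have "\<gamma> s \<in> Mt" using gim that(1) by blast
      moreover have "\<sigma> s \<in> Mt" using sim that(1) by blast
      ultimately show ?thesis
        unfolding \<Gamma>_def using convexD[OF convex_Mt, of "\<gamma> s" "\<sigma> s" "1 - l" l] that(2) by simp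
    qed
    have Gcurve: "fd_causal_curve \<Omega> 0 1 (\<lambda>s. \<Gamma> s l)" if l: "l \<in> {0..1}" for l
      unfolding curve_iff[OF pos] curve_def
    proof (intro conjI)
      show "(0::real) \<le> 1" by simp
      show "(\<lambda>s. \<Gamma> s l) ` {0..1} \<subseteq> Mt" using Gim[OF _ l] by blast
      have "(\<bar>1 - l\<bar> * Lg + \<bar>l\<bar> * max (L1 * \<bar>k1\<bar>) (L2 * \<bar>k2\<bar>))-lipschitz_on {0..1} (\<lambda>s. \<Gamma> s l)"
        unfolding \<Gamma>_def by (intro lipschitz_on_add lipschitz_on_cmult gL sL)
      then show "\<exists>L. L-lipschitz_on {0..1} (\<lambda>s. \<Gamma> s l)" by blast
      show "\<exists>N. negligible N \<and> (\<forall>s\<in>{0..1} - N. \<exists>d. ((\<lambda>s. \<Gamma> s l) has_vector_derivative d) (at s) \<and> fdv d)"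
      proof (rule exI[of _ "Ng \<union> Ns"], intro conjI ballI)
        show "negligible (Ng \<union> Ns)" using Ng Ns by (rule negligible_Un)
        fix s assume s: "s \<in> {0..1} - (Ng \<union> Ns)"
        obtain dg where dg: "(\<gamma> has_vector_derivative dg) (at s)" "fdv dg" using gD s by blast
        obtain ds where ds: "(\<sigma> has_vector_derivative ds) (at s)" "fdv ds" using sD s by blast
        have "((\<lambda>s. \<Gamma> s l) has_vector_derivative ((1 - l) *\<^sub>R dg + l *\<^sub>R ds)) (at s)"
          unfolding \<Gamma>_def by (auto intro!: derivative_eq_intros dg(1) ds(1))
        then show "\<exists>d. ((\<lambda>s. \<Gamma> s l) has_vector_derivative d) (at s) \<and> fdv d"
        proof (intro exI conjI)
          show "fdv ((1 - l) *\<^sub>R dg + l *\<^sub>R ds)" using fdv_comb[OF dg(2) ds(2), of l] l by simp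
        qed assumption
      qed
    qed
    have hom: "causal_homotopy \<Omega> \<gamma> \<Gamma>"
      unfolding causal_homotopy_def
    proof (intro conjI ballI)
      show "continuous_on ({0..1} \<times> {0..1}) (\<lambda>(s, l). \<Gamma> s l)"
        unfolding case_prod_unfold \<Gamma>_def
        by (intro continuous_intros gfst sfst)
      fix s l assume "s \<in> {0..1::real}" "l \<in> {0..1::real}"
      then show "\<Gamma> s l \<in> Mt" by (rule Gim)
    next
      fix s show "\<Gamma> s 0 = \<gamma> s" by (simp add: \<Gamma>_def)
    next
      fix l assume l: "l \<in> {0..1::real}"
      show "fd_causal_curve \<Omega> 0 1 (\<lambda>s. \<Gamma> s l)" by (rule Gcurve[OF l])
      show "\<Gamma> 0 l = \<gamma> 0" using s0 by (simp add: \<Gamma>_def scaleR_diff_left)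
      show "\<Gamma> 1 l = \<gamma> 1" using s1 by (simp add: \<Gamma>_def scaleR_diff_left)
    qed
    have pG: "p = \<Gamma> (1/2) 1" using sh by (simp add: \<Gamma>_def)
    have ex: "\<exists>s\<in>{0..1}. \<exists>l\<in>{0..1}. p = \<Gamma> s l"
      by (rule bexI[of _ "1/2"], rule bexI[of _ 1], rule pG) auto
    show ?thesis by (rule exI[of _ \<Gamma>], rule conjI, rule hom, rule ex)
  qed
qed

end
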